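(* Under the standing assumptions, define for real $z\in[0,n]$ $$\Phi_c(z)=\frac{\Gamma(n+1)}{\Gamma(z+1)\Gamma(n-z+1)}\left(\frac1d\right)^{z}\left(1-\frac1d\right)^{n-z}f\!\left(\frac zn\right)^{rm},$$ where $\Gamma$ is the Gamma function. Then $\Phi_c(\omega)=\Phi(\omega)$ for $\omega=1,2,\dots,n$, and, for all sufficiently large $n$, $\Phi_c'(z)<0$ for all $z\in(n\eta_1,n\eta_2)$.
   Context: Parameters: integer $k\ge2$, constants $\alpha>0$, $r>0$, $0<p<1$; $d=n^{\alpha}$ (treated as an integer), $m=n\ln d$, $\tau=\frac1{1-p}$, $r_{cr}=\frac1{\ln\tau}$. Standing assumptions: $(2k-1)\alpha>1$, $k\alpha\le1$, $k\ge\frac{\tau\ln\tau}{\tau-1}$, and $r<r_{cr}$. Notation: $f(s)=1+\frac{p}{1-p}\cdot\frac{s^k-d^{-k}}{1-d^{-k}}$ for $s\in[0,1]$; $B(S)=\binom{n}{S}\left(\frac1d\right)^{S}\left(1-\frac1d\right)^{n-S}$; $W(S)=f(S/n)^{rm}$; $\Phi(S)=B(S)W(S)$. Let $\lambda>0$ be a fixed constant and $\eta_1=\frac1d+\frac{\lambda}{n^{1-(k-1)\alpha}\ln d}$. Let $\alpha_0=\frac{(2k-1)\alpha-1}{2(k-1)}$, and let $\eta_2,\eta_3,\mu$ be constants with $0<\eta_2<\eta_3<1$, $\alpha_0/\alpha-\mu\eta_2^{k-1}>0$, $\mu>\frac{kpr}{1-p}$, and $r\ln(1-p)+\eta_3>0$.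 *)

theory Defs
  imports "HOL-Analysis.Analysis"
begin

definition dd :: "real \<Rightarrow> nat \<Rightarrow> real" where
  "dd \<alpha> n = real n powr \<alpha>"

definition mm :: "real \<Rightarrow> nat \<Rightarrow> real" where
  "mm \<alpha> n = real n * ln (dd \<alpha> n)"

definition tau :: "real \<Rightarrow> real" where
  "tau p = 1 / (1 - p)"

definition r_cr :: "real \<Rightarrow> real" where
  "r_cr p = 1 / ln (tau p)"

definition ff :: "nat \<Rightarrow> real \<Rightarrow> real \<Rightarrow> nat \<Rightarrow> real \<Rightarrow> real" where
  "ff k p \<alpha> n s = 1 + p / (1 - p) * ((s ^ k - (1 / dd \<alpha> n) ^ k) / (1 - (1 / dd \<alpha> n) ^ k))"

definition BB :: "real \<Rightarrow> nat \<Rightarrow> nat \<Rightarrow> real" where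
  "BB \<alpha> n S = real (n choose S) * (1 / dd \<alpha> n) ^ S * (1 - 1 / dd \<alpha> n) ^ (n - S)"

definition WW :: "nat \<Rightarrow> real \<Rightarrow> real \<Rightarrow> real \<Rightarrow> nat \<Rightarrow> nat \<Rightarrow> real" where
  "WW k p r \<alpha> n S = ff k p \<alpha> n (real S / real n) powr (r * mm \<alpha> n)"

definition Phi :: "nat \<Rightarrow> real \<Rightarrow> real \<Rightarrow> real \<Rightarrow> nat \<Rightarrow> nat \<Rightarrow> real" where
  "Phi k p r \<alpha> n S = BB \<alpha> n S * WW k p r \<alpha> n S"

definition Phic :: "nat \<Rightarrow> real \<Rightarrow> real \<Rightarrow> real \<Rightarrow> nat \<Rightarrow> real \<Rightarrow> real" where
  "Phic k p r \<alpha> n z =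
     Gamma (real n + 1) / (Gamma (z + 1) * Gamma (real n - z + 1))
     * (1 / dd \<alpha> n) powr z * (1 - 1 / dd \<alpha> n) powr (real n - z)
     * ff k p \<alpha> n (z / real n) powr (r * mm \<alpha> n)"

definition eta1 :: "nat \<Rightarrow> real \<Rightarrow> real \<Rightarrow> nat \<Rightarrow> real" where
  "eta1 k \<alpha> lam n = 1 / dd \<alpha> n + lam / (real n powr (1 - (real k - 1) * \<alpha>) * ln (dd \<alpha> n))"

definition alpha0 :: "nat \<Rightarrow> real \<Rightarrow> real" where
  "alpha0 k \<alpha> = ((2 * real k - 1) * \<alpha> - 1) / (2 * (real k - 1))"

end

theory Submission
  imports Defs "HOL-Real_Asymp.Real_Asymp"
begin



lemma digamma_bounds:
  fixes x :: real assumes x: "x > 0"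
  shows "Digamma x \<le> ln x" "ln x \<le> Digamma (x+1)"
proof -
  obtain \<xi> where xi: "x < \<xi>" "\<xi> < x + 1" "ln_Gamma (x+1) - ln_Gamma x = (x + 1 - x) * Digamma \<xi>"
  proof -
    have "\<And>y. x \<le> y \<Longrightarrow> y \<le> x + 1 \<Longrightarrow> (ln_Gamma has_real_derivative Digamma y) (at y)"
      using x by (intro has_field_derivative_ln_Gamma_real) simp
    then show ?thesis using MVT2[of x "x+1" ln_Gamma Digamma] that by auto
  qed
  have "Gamma (x+1) = x * Gamma x"
    using x by (intro Gamma_plus1) (auto elim!: nonpos_Ints_cases)
  hence "ln_Gamma (x+1) = ln x + ln_Gamma x"
  proof -
    have g: "Gamma x > 0" using x by simp
    have "ln_Gamma (x+1) = ln (x * Gamma x)" using x \<open>Gamma (x+1) = x * Gamma x\<close>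
      by (simp add: ln_Gamma_real_pos)
    also have "\<dots> = ln x + ln (Gamma x)" using x g by (rule ln_mult_pos)
    finally show ?thesis using x by (simp add: ln_Gamma_real_pos)
  qed
  with xi have eq: "Digamma \<xi> = ln x" by simp
  show "Digamma x \<le> ln x" using Digamma_real_mono[of x \<xi>] xi x eq by simp
  show "ln x \<le> Digamma (x+1)" using Digamma_real_mono[of \<xi> "x+1"] xi x eq by simp
qed



lemma part1:
  assumes n: "n \<ge> 2" and a: "\<alpha> > 0" and w: "\<omega> \<in> {1..n}"
  shows "Phic k p r \<alpha> n (real \<omega>) = Phi k p r \<alpha> n \<omega>"
proof -
  have d1: "dd \<alpha> n > 1" unfolding dd_def using n a
    by (intro gr_one_powr) auto
  have wn: "\<omega> \<le> n" using w by auto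
  have G1: "Gamma (real m + 1) = (fact m :: real)" for m
    by (subst add.commute) (rule Gamma_fact)
  have g: "Gamma (real n + 1) / (Gamma (real \<omega> + 1) * Gamma (real n - real \<omega> + 1)) = real (n choose \<omega>)"
  proof -
    have e: "real n - real \<omega> = real (n - \<omega>)" using wn by simp
    show ?thesis unfolding e G1 by (rule binomial_fact[OF wn, symmetric])
  qed
  have p1: "(1 / dd \<alpha> n) powr real \<omega> = (1 / dd \<alpha> n) ^ \<omega>"
    using d1 by (intro powr_realpow) simp
  have p2: "(1 - 1 / dd \<alpha> n) powr (real n - real \<omega>) = (1 - 1 / dd \<alpha> n) ^ (n - \<omega>)"
  proof -
    have "real n - real \<omega> = real (n - \<omega>)" using wn by simp
    moreover have "1 - 1 / dd \<alpha> n > 0" using d1 by simp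
    ultimately show ?thesis by (simp only:) (rule powr_realpow)
  qed
  show ?thesis unfolding Phic_def Phi_def BB_def WW_def using g p1 p2 by simp
qed



lemma deriv_Phic:
  fixes z :: real
  assumes n: "real n > 0" and d1: "dd \<alpha> n > 1"
    and F: "\<And>s. s \<ge> 0 \<Longrightarrow> ff k p \<alpha> n s > 0"
    and z: "0 < z" "z < real n" and p1: "p \<noteq> 1" and t1: "(1 / dd \<alpha> n)^k \<noteq> 1"
  shows "(Phic k p r \<alpha> n has_real_derivative Phic k p r \<alpha> n z *
     (- Digamma (z+1) + Digamma (real n - z + 1) + ln (1 / dd \<alpha> n) - ln (1 - 1 / dd \<alpha> n)
      + r * mm \<alpha> n * (p / (1 - p) * (real k * (z / real n) ^ (k - 1) / real n / (1 - (1 / dd \<alpha> n) ^ k)))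
        / ff k p \<alpha> n (z / real n))) (at z)"
proof -
  define d where "d = dd \<alpha> n"
  define M where "M = r * mm \<alpha> n"
  define E where "E = (\<lambda>y. ln_Gamma (real n + 1) - ln_Gamma (y + 1) - ln_Gamma (real n - y + 1)
      + y * ln (1 / d) + (real n - y) * ln (1 - 1 / d) + M * ln (ff k p \<alpha> n (y / real n)))"
  have eq: "Phic k p r \<alpha> n y = exp (E y)" if y: "y \<in> {0<..<real n}" for y
  proof -
    have "ff k p \<alpha> n (y / real n) > 0" using F y n by auto
    moreover have "1 / d > 0" "1 - 1/d > 0" using d1 by (auto simp: d_def)
    moreover have "Gamma (y+1) > 0" "Gamma (real n - y + 1) > 0" "Gamma (real n + 1) > 0" using y by auto
    moreover have "y + 1 > 0" "real n - y + 1 > 0" using y by auto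
    ultimately have
      g1: "Gamma (real n + 1) = exp (ln_Gamma (real n + 1))" and
      g2: "Gamma (y + 1) = exp (ln_Gamma (y + 1))" and
      g3: "Gamma (real n - y + 1) = exp (ln_Gamma (real n - y + 1))" and
      q1: "(1 / d) powr y = exp (y * ln (1 / d))" and
      q2: "(1 - 1 / d) powr (real n - y) = exp ((real n - y) * ln (1 - 1 / d))" and
      q3: "ff k p \<alpha> n (y / real n) powr M = exp (M * ln (ff k p \<alpha> n (y / real n)))"
      by (simp_all add: Gamma_real_pos_exp powr_def)
    have ex: "\<And>a b c e f g::real. exp a / (exp b * exp c) * exp e * exp f * exp g = exp (a - b - c + e + f + g)"
      by (simp add: exp_add exp_diff)
    show ?thesis unfolding Phic_def E_def d_def[symmetric] M_def[symmetric] g1 g2 g3 q1 q2 q3 ex by (rule refl)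
  qed
  have Fz: "ff k p \<alpha> n (z / real n) > 0" using F z n by auto
  have dE: "(E has_real_derivative
     (- Digamma (z+1) + Digamma (real n - z + 1) + ln (1 / d) - ln (1 - 1 / d)
      + M * (p / (1 - p) * (real k * (z / real n) ^ (k - 1) / real n / (1 - (1 / d) ^ k)))
        / ff k p \<alpha> n (z / real n))) (at z)"
    unfolding E_def ff_def
    using z Fz n d1 p1 t1 by (auto intro!: derivative_eq_intros simp: ff_def d_def) (simp add: field_simps)
  have "((\<lambda>y. exp (E y)) has_real_derivative exp (E z) *
     (- Digamma (z+1) + Digamma (real n - z + 1) + ln (1 / d) - ln (1 - 1 / d)
      + M * (p / (1 - p) * (real k * (z / real n) ^ (k - 1) / real n / (1 - (1 / d) ^ k)))
        / ff k p \<alpha> n (z / real n))) (at z)"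
    by (rule DERIV_chain2[OF DERIV_exp dE])
  then have "(Phic k p r \<alpha> n has_real_derivative exp (E z) *
     (- Digamma (z+1) + Digamma (real n - z + 1) + ln (1 / d) - ln (1 - 1 / d)
      + M * (p / (1 - p) * (real k * (z / real n) ^ (k - 1) / real n / (1 - (1 / d) ^ k)))
        / ff k p \<alpha> n (z / real n))) (at z)"
    by (rule has_field_derivative_transform_within_open[where S="{0<..<real n}"])
       (use z eq in auto)
  then show ?thesis using eq[of z] z unfolding d_def M_def by simp
qed



lemma key_ineq:
  fixes x d s r p \<delta> \<eta>2 \<theta> \<beta> :: real and k :: nat
  assumes x: "x \<ge> 2" and d: "d \<ge> 2" and k: "k \<ge> 2" and r: "r > 0" and p: "0 < p" "p < 1"
    and t: "((1/d)^k) * (1 + p/(1-p)) < 1/2"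
    and dl: "\<delta> > 0" and s1: "1/d + \<delta>/d < s" and s2: "s < \<eta>2" and e2: "\<eta>2 < 1"
    and th: "\<theta> = r * (p/(1-p) * real k) * \<eta>2^(k-1)"
    and E4: "\<delta>/2 - 2/x > 2 * r * (p/(1-p) * real k) * ln d * (2/d)^(k-1)"
    and E5: "ln 2 - 2/x > 2 * r * (p/(1-p) * real k) * ln d * d powr (-\<beta>)"
    and E6: "(1 - \<beta> - 2*\<theta>) * ln d > 2/x"
  shows "ln (s*d) - 2/x > r * (x * ln d) * (p/(1-p) * (real k * s^(k-1) / x / (1 - (1/d)^k)))
            / (1 + p/(1-p) * ((s^k - (1/d)^k) / (1 - (1/d)^k)))"
proof -
  define q where "q = p/(1-p)"
  define c where "c = q * real k"
  define t where "t = (1/d)^k"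
  have q0: "q > 0" using p by (simp add: q_def)
  have c0: "c \<ge> 0" using q0 by (simp add: c_def)
  have t0: "t \<ge> 0" using d by (simp add: t_def)
  have t1: "t < 1/2" using t q0 t0 unfolding t_def[symmetric] q_def[symmetric]
    by (smt (verit) mult_le_cancel_left1)
  have lnd: "ln d > 0" using d by simp
  have dpos: "d > 0" using d by simp
  have sd: "s*d > 1 + \<delta>"
  proof -
    have "s*d > (1/d + \<delta>/d)*d" using s1 dpos by (intro mult_strict_right_mono) auto
    moreover have "(1/d + \<delta>/d)*d = 1+\<delta>" using dpos by (simp add: field_simps)
    ultimately show ?thesis by simp
  qed
  have sgt: "s > 1/d" using sd dpos dl by (simp add: field_simps)
  have s0: "s > 0" using sgt dpos by (smt (verit) divide_pos_pos)
  have s1': "s < 1" using s2 e2 by simp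
  have sk: "s^k \<ge> t" unfolding t_def using sgt dpos by (intro power_mono) auto
  have F1: "1 + q * ((s^k - t) / (1 - t)) \<ge> 1" using sk t1 q0 by simp
  define P where "P = 2 * r * c * ln d * s^(k-1)"
  have R: "r * (x * ln d) * (q * (real k * s^(k-1) / x / (1 - t)))
            / (1 + q * ((s^k - t) / (1 - t))) \<le> P"
  proof -
    have "r * (x * ln d) * (q * (real k * s^(k-1) / x / (1 - t)))
            / (1 + q * ((s^k - t) / (1 - t))) \<le> r * (x * ln d) * (q * (real k * s^(k-1) / x / (1 - t)))"
    proof -
      have a0: "0 \<le> r * (x * ln d) * (q * (real k * s^(k-1) / x / (1 - t)))"
        using r x lnd q0 s0 t1 by simp
      show ?thesis using divide_left_mono[OF F1 a0] F1 by simp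
    qed
    also have "\<dots> = r * ln d * c * s^(k-1) / (1 - t)" using x t1 unfolding c_def by (simp add: field_simps)
    also have "\<dots> \<le> r * ln d * c * s^(k-1) * 2"
    proof -
      have a0: "0 \<le> r * ln d * c * s^(k-1)" using r lnd c0 s0 by simp
      have "1/(1-t) \<le> 2" using t1 t0 by (simp add: field_simps)
      from mult_left_mono[OF this a0] show ?thesis by simp
    qed
    finally show ?thesis unfolding P_def by (simp add: ac_simps)
  qed
  have main: "ln (s*d) - 2/x > P"
  proof (cases "s \<le> 2/d")
    case True
    have "s^(k-1) \<le> (2/d)^(k-1)" using True s0 by (intro power_mono) auto
    hence "P \<le> 2 * r * c * ln d * (2/d)^(k-1)" unfolding P_def using r c0 lnd
      by (intro mult_left_mono) (auto)
    moreover have "ln (s*d) > \<delta>/2"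
    proof -
      have sd2: "s*d \<le> 2" using True dpos by (simp add: field_simps)
      have "ln (1/(s*d)) \<le> 1/(s*d) - 1" using sd dl by (intro ln_le_minus_one) auto
      hence "ln (s*d) \<ge> 1 - 1/(s*d)" using sd dl s0 dpos by (simp add: ln_div)
      moreover have "1 - 1/(s*d) \<ge> (s*d - 1)/2"
      proof -
        have "(s*d-1)/(s*d) \<ge> (s*d-1)/2" using sd2 sd dl by (intro divide_left_mono) auto
        moreover have "1 - 1/(s*d) = (s*d-1)/(s*d)" using s0 dpos by (simp add: field_simps)
        ultimately show ?thesis by simp
      qed
      moreover have "(s*d-1)/2 > \<delta>/2" using sd by (simp add: divide_strict_right_mono)
      ultimately show ?thesis by linarith
    qed
    ultimately show ?thesis using E4 unfolding c_def q_def by linarith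
  next
    case False
    show ?thesis
    proof (cases "s \<le> d powr (-\<beta>)")
      case True
      have "s^(k-1) \<le> s^1" using s0 s1' k by (intro power_decreasing) auto
      hence "s^(k-1) \<le> d powr (-\<beta>)" using True by simp
      hence "P \<le> 2 * r * c * ln d * d powr (-\<beta>)" unfolding P_def using r c0 lnd
        by (intro mult_left_mono) (auto)
      moreover have "ln (s*d) > ln 2" using False dpos s0 by (simp add: field_simps)
      ultimately show ?thesis using E5 unfolding c_def q_def by linarith
    next
      case F2: False
      have "s^(k-1) \<le> \<eta>2^(k-1)" using s0 s2 by (intro power_mono) auto
      hence "P \<le> (2*r*c*ln d) * \<eta>2^(k-1)" unfolding P_def using r c0 lnd
        by (intro mult_left_mono) auto
      also have "\<dots> = 2 * \<theta> * ln d" by (simp add: th c_def q_def)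
      finally have "P \<le> 2 * \<theta> * ln d" .
      moreover have "ln (s*d) > (1 - \<beta>) * ln d"
      proof -
        have "ln s > ln (d powr (-\<beta>))" using F2 dpos s0 by (subst ln_less_cancel_iff) auto
        hence "ln s > -\<beta> * ln d" using dpos by (simp add: ln_powr)
        thus ?thesis using s0 dpos by (simp add: ln_mult algebra_simps)
      qed
      ultimately show ?thesis using E6 by (simp add: algebra_simps)
    qed
  qed
  show ?thesis using R main unfolding q_def t_def by linarith
qed

lemma Phic_pos:
  fixes z :: real
  assumes n: "real n > 0" and d1: "dd \<alpha> n > 1"
    and F: "ff k p \<alpha> n (z / real n) > 0"
    and z: "0 < z" "z < real n"
  shows "Phic k p r \<alpha> n z > 0"
proof -
  have "1 / dd \<alpha> n > 0" "1 - 1 / dd \<alpha> n > 0" using d1 by auto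
  moreover have "Gamma (z+1) > 0" "Gamma (real n - z + 1) > 0" "Gamma (real n + 1) > 0" using z by auto
  ultimately show ?thesis unfolding Phic_def using F by simp
qed

lemma neg_at:
  fixes z \<delta> \<eta>2 \<theta> \<beta> r p \<alpha> :: real and k n :: nat
  assumes x: "real n \<ge> 2" and d: "dd \<alpha> n \<ge> 2" and k: "k \<ge> 2" and r: "r > 0" and p: "0 < p" "p < 1"
    and t: "((1/dd \<alpha> n)^k) * (1 + p/(1-p)) < 1/2"
    and dl: "\<delta> > 0" and e2: "\<eta>2 < 1"
    and th: "\<theta> = r * (p/(1-p) * real k) * \<eta>2^(k-1)"
    and E4: "\<delta>/2 - 2/real n > 2 * r * (p/(1-p) * real k) * ln (dd \<alpha> n) * (2/dd \<alpha> n)^(k-1)"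
    and E5: "ln 2 - 2/real n > 2 * r * (p/(1-p) * real k) * ln (dd \<alpha> n) * dd \<alpha> n powr (-\<beta>)"
    and E6: "(1 - \<beta> - 2*\<theta>) * ln (dd \<alpha> n) > 2/real n"
    and z1: "real n * (1/dd \<alpha> n + \<delta>/dd \<alpha> n) < z" and z2: "z < real n * \<eta>2"
  shows "\<exists>D. (Phic k p r \<alpha> n has_real_derivative D) (at z) \<and> D < 0"
proof -
  define d where "d = dd \<alpha> n"
  define s where "s = z / real n"
  define q where "q = p/(1-p)"
  define t where "t = (1/d)^k"
  have npos: "real n > 0" using x by simp
  have dpos: "d > 0" using d by (simp add: d_def)
  have q0: "q > 0" using p by (simp add: q_def)
  have t0: "t \<ge> 0" using dpos by (simp add: t_def)
  have tq: "t * (1 + q) < 1/2" using t by (simp add: t_def q_def d_def)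
  have t1: "t < 1/2" using tq q0 t0 by (smt (verit) mult_le_cancel_left1)
  have zs: "z = s * real n" using npos by (simp add: s_def)
  have s1: "1/d + \<delta>/d < s" using z1 npos unfolding s_def d_def by (simp add: field_simps)
  have s2: "s < \<eta>2" using z2 npos unfolding s_def by (simp add: field_simps)
  have sgt: "s > 1/d" using s1 dl dpos by (smt (verit) divide_pos_pos)
  have s0: "s > 0" using sgt dpos by (smt (verit) divide_pos_pos)
  have s1': "s < 1" using s2 e2 by simp
  have z0: "z > 0" using zs s0 npos by simp
  have zn: "z < real n" using zs s1' npos by simp
  have F: "ff k p \<alpha> n y > 0" if "y \<ge> 0" for y
  proof -
    have "y^k \<ge> 0" using that by simp
    hence "(y^k - t)/(1-t) \<ge> (-t)/(1-t)" using t1 by (intro divide_right_mono) auto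
    hence "q * ((y^k - t)/(1-t)) \<ge> q * (-t/(1-t))" using q0 by (intro mult_left_mono) auto
    moreover have "1 + q * (-t/(1-t)) > 0" using tq t1 t0 q0 by (simp add: field_simps)
    ultimately show ?thesis unfolding ff_def q_def[symmetric] t_def[symmetric] d_def[symmetric] by linarith
  qed
  have d1: "dd \<alpha> n > 1" using d by simp
  have pne: "p \<noteq> 1" using p by simp
  have tne: "(1 / dd \<alpha> n)^k \<noteq> 1" using t1 unfolding t_def d_def by simp
  note der = deriv_Phic[OF npos d1 F z0 zn pne tne, of r]
  have pos: "Phic k p r \<alpha> n z > 0" using Phic_pos[OF npos d1 F[of "z / real n"] z0 zn] z0 npos by simp
  define R where "R = r * (real n * ln d) * (q * (real k * s^(k-1) / real n / (1 - t)))
            / (1 + q * ((s^k - t) / (1 - t)))"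
  have key: "ln (s*d) - 2/real n > R"
    unfolding R_def q_def t_def
    by (rule key_ineq[OF x _ k r p _ dl s1 s2 e2 th, of \<beta>]) (use d t E4 E5 E6 in \<open>simp_all add: d_def\<close>)
  have dg1: "Digamma (z+1) \<ge> ln z" using digamma_bounds(2)[OF z0] .
  have dg2: "Digamma (real n - z + 1) \<le> ln (real n - z + 1)" using digamma_bounds(1)[of "real n - z + 1"] zn by simp
  have lnd: "ln (1/d) - ln (1 - 1/d) = - ln (d - 1)"
  proof -
    have d1': "d > 1" using d by (simp add: d_def)
    have "ln (1/d) = - ln d" using d1' by (simp add: ln_div)
    moreover have "1 - 1/d = (d-1)/d" using d1' by (simp add: field_simps)
    moreover have "ln ((d-1)/d) = ln (d-1) - ln d" using d1' by (intro ln_divide_pos) auto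
    ultimately show ?thesis by simp
  qed
  have step2: "ln z + ln (d - 1) - ln (real n - z + 1) \<ge> ln (s*d) - 2/real n"
  proof -
    have a: "1 - 1/d > 0" "1 - s + 1/real n > 0"
    proof -
      show "1 - 1/d > 0" using d by (simp add: d_def)
      have "1/real n > 0" using npos by simp
      thus "1 - s + 1/real n > 0" using s1' by linarith
    qed
    have "ln z + ln (d - 1) - ln (real n - z + 1)
        = ln (s*d) + ln (1 - 1/d) - ln (1 - s + 1/real n)"
    proof -
      have "z = s * real n" by (rule zs)
      have "ln z = ln s + ln (real n)" using zs s0 npos by (simp add: ln_mult)
      moreover have "ln (d - 1) = ln d + ln (1 - 1/d)"
      proof -
        have "d - 1 = d * (1 - 1/d)" using dpos by (simp add: field_simps)
        thus ?thesis using a dpos by (simp add: ln_mult_pos)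
      qed
      moreover have "ln (real n - z + 1) = ln (real n) + ln (1 - s + 1/real n)"
      proof -
        have "real n - z + 1 = real n * (1 - s + 1/real n)" using npos zs by (simp add: field_simps)
        thus ?thesis using a npos by (simp add: ln_mult_pos)
      qed
      moreover have "ln (s*d) = ln s + ln d" using s0 dpos by (simp add: ln_mult)
      ultimately show ?thesis by simp
    qed
    moreover have "ln (1 - s + 1/real n) - ln (1 - 1/d) \<le> 2/real n"
    proof -
      have "ln (1 - s + 1/real n) - ln (1 - 1/d) = ln ((1 - s + 1/real n) / (1 - 1/d))"
        using a by (simp add: ln_divide_pos)
      also have "\<dots> \<le> (1 - s + 1/real n) / (1 - 1/d) - 1" using a by (intro ln_le_minus_one) auto
      also have "\<dots> = (1/d - s + 1/real n) / (1 - 1/d)"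
      proof -
        have B: "1 - 1/d \<noteq> 0" using a(1) by linarith
        have gen: "\<And>A B::real. B \<noteq> 0 \<Longrightarrow> A/B - 1 = (A - B)/B" by (simp add: field_simps)
        have e1: "(1 - s + 1/real n) / (1 - 1/d) - 1 = ((1 - s + 1/real n) - (1 - 1/d)) / (1 - 1/d)"
          by (rule gen[OF B])
        have e2: "(1 - s + 1/real n) - (1 - 1/d) = 1/d - s + 1/real n" by simp
        show ?thesis using e1 unfolding e2 .
      qed
      also have "\<dots> \<le> (1/real n) / (1 - 1/d)" using a sgt by (intro divide_right_mono) auto
      also have "\<dots> \<le> (1/real n) / (1/2)" using a d npos by (intro divide_left_mono) (auto simp: d_def field_simps)
      finally show ?thesis by simp
    qed
    ultimately show ?thesis by linarith
  qed
  define L where "L = - Digamma (z+1) + Digamma (real n - z + 1) + ln (1 / dd \<alpha> n) - ln (1 - 1 / dd \<alpha> n)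
      + r * mm \<alpha> n * (p / (1 - p) * (real k * (z / real n) ^ (k - 1) / real n / (1 - (1 / dd \<alpha> n) ^ k)))
        / ff k p \<alpha> n (z / real n)"
  have LR: "L = - Digamma (z+1) + Digamma (real n - z + 1) + (ln (1/d) - ln (1 - 1/d)) + R"
    unfolding L_def R_def mm_def ff_def s_def q_def t_def d_def by simp
  have "L < 0" using LR lnd step2 key dg1 dg2 by linarith
  then show ?thesis using der pos unfolding L_def[symmetric]
    by (intro exI[of _ "Phic k p r \<alpha> n z * L"]) (simp add: mult_pos_neg)
qed




lemma ev_A:
  fixes a l :: real and j :: nat
  assumes "a > 0" "l > 0"
  shows "eventually (\<lambda>x. (4*a/l) * ln x / (x powr a)^(Suc j) < 1/2) at_top"
  using assms by real_asymp

lemma ev_B0: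
  fixes K e :: real
  assumes "e > 0"
  shows "eventually (\<lambda>x. K * ((ln x)^2 * x powr (-e)) < 1/2) at_top"
proof -
  have "((\<lambda>x. K * ((ln x)^2 * x powr (-e))) \<longlongrightarrow> K * 0) at_top"
    by (intro tendsto_mult tendsto_const) (use assms in real_asymp)
  then show ?thesis by (rule order_tendstoD) simp
qed

lemma ev_B:
  fixes a K :: real and j :: nat
  assumes a: "a > 0" and e: "(2 * real j + 1) * a > 1"
  shows "eventually (\<lambda>x. K * (ln x)^2 * (x / (x powr a)^(2*j+1)) < 1/2) at_top"
proof -
  have "eventually (\<lambda>x. K * ((ln x)^2 * x powr (-((2 * real j + 1) * a - 1))) < 1/2) at_top"
    by (rule ev_B0) (use e in simp)
  moreover have "eventually (\<lambda>x. x > (0::real)) at_top" by (rule eventually_gt_at_top)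
  ultimately show ?thesis
  proof eventually_elim
    case (elim x)
    have "(x powr a)^(2*j+1) = x powr ((2 * real j + 1) * a)"
    proof -
      have "(x powr a)^(2*j+1) = (x powr a) powr (real (2*j+1))"
      proof -
        have "x powr a > 0" using elim(2) by simp
        thus ?thesis by (rule powr_realpow[symmetric])
      qed
      also have "\<dots> = x powr (a * real (2*j+1))" by (rule powr_powr)
      also have "\<dots> = x powr ((2 * real j + 1) * a)"
        by (rule arg_cong[where f="\<lambda>t. x powr t"]) (simp add: algebra_simps)
      finally show ?thesis .
    qed
    moreover have "x / x powr ((2 * real j + 1) * a) = x powr (-((2 * real j + 1) * a - 1))"
    proof -
      have "x powr (-((2 * real j + 1) * a - 1)) = x powr (1 - (2 * real j + 1) * a)" by simp
      also have "\<dots> = x powr 1 / x powr ((2 * real j + 1) * a)" by (rule powr_diff)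
      finally show ?thesis using elim(2) by simp
    qed
    ultimately show ?case using elim(1) by (simp add: mult.assoc)
  qed
qed



lemma E4_pointwise:
  fixes x a l C :: real and j :: nat
  assumes x: "x > 1" and a: "a > 0" and l: "l > 0" and C: "C \<ge> 0"
    and A: "(4*a/l) * ln x / (x powr a)^(Suc j) < 1/2"
    and B: "(2*C*a^2*2^j/l) * (ln x)^2 * (x / (x powr a)^(2*j+1)) < 1/2"
  shows "(x powr a * (l / (x powr (1 - (real (Suc j) - 1)*a) * ln (x powr a))))/2 - 2/x
         > C * ln (x powr a) * (2 / x powr a)^j"
proof -
  define u where "u = x powr a"
  define L where "L = ln x"
  have u: "u > 0" using x by (simp add: u_def)
  have L: "L > 0" using x by (simp add: L_def)
  have x0: "x > 0" using x by simp
  have e1: "x powr (1 - (real (Suc j) - 1)*a) = x / u^j"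
  proof -
    have "x powr (1 - (real (Suc j) - 1)*a) = x powr 1 / x powr (a * real j)"
      by (subst powr_diff[symmetric]) (simp add: mult.commute)
    also have "x powr (a * real j) = u^j" using x0 by (simp add: u_def powr_powr[symmetric] powr_realpow)
    finally show ?thesis using x0 by simp
  qed
  have e2: "ln (x powr a) = a * L" using x0 by (simp add: L_def ln_powr)
  have e2': "ln u = a * L" using e2 by (simp add: u_def)
  define T where "T = l * u^(Suc j) / (2 * x * a * L)"
  have T: "T > 0" using l u x0 a L by (simp add: T_def)
  have lhs: "(x powr a * (l / (x powr (1 - (real (Suc j) - 1)*a) * ln (x powr a))))/2 = T"
    unfolding e1 e2 u_def[symmetric] T_def using u x0 a L by (simp add: field_simps e2')
  have tA: "2/x = T * ((4*a/l) * L / u^(Suc j))"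
    unfolding T_def using u x0 a L l by (simp add: field_simps)
  have tB: "C * (a * L) * (2 / u)^j = T * ((2*C*a^2*2^j/l) * L^2 * (x / u^(2*j+1)))"
  proof -
    define v where "v = u^j"
    have v: "v > 0" using u by (simp add: v_def)
    have p1: "u^(Suc j) = u * v" by (simp add: v_def)
    have p2: "u^(2*j+1) = u * v * v"
    proof -
      have "u^(2*j+1) = u^(j+j) * u" by (simp add: mult_2)
      also have "\<dots> = u * v * v" by (simp only: power_add v_def) (simp add: ac_simps)
      finally show ?thesis .
    qed
    have p3: "(2/u)^j = 2^j / v" by (simp add: v_def power_divide)
    show ?thesis unfolding T_def p1 p2 p3 using u v x0 a L l
      by (simp add: field_simps power2_eq_square)
  qed
  define Ax where "Ax = (4*a/l) * L / u^(Suc j)"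
  define Bx where "Bx = (2*C*a^2*2^j/l) * L^2 * (x / u^(2*j+1))"
  have sum: "Ax + Bx < 1" using A B unfolding Ax_def Bx_def u_def L_def by linarith
  have m: "T * (Ax + Bx) < T * 1" using mult_strict_left_mono[OF sum T] .
  have r1: "C * ln (x powr a) * (2 / x powr a)^j = T * Bx"
    using tB unfolding Bx_def u_def[symmetric] e2' .
  have r2: "2/x = T * Ax" using tA unfolding Ax_def .
  show ?thesis unfolding lhs r1 r2 using m by (simp add: algebra_simps)
qed

theorem lemma4p4:
  fixes k :: nat and \<alpha> r p lam \<eta>2 \<eta>3 \<mu> :: real
  assumes k2: "k \<ge> 2" and apos: "\<alpha> > 0" and rpos: "r > 0"
    and p0: "0 < p" and p1: "p < 1"
    and A1: "(2 * real k - 1) * \<alpha> > 1" and A2: "real k * \<alpha> \<le> 1"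
    and A3: "real k \<ge> tau p * ln (tau p) / (tau p - 1)"
    and A4: "r < r_cr p"
    and lam: "lam > 0"
    and eta: "0 < \<eta>2" "\<eta>2 < \<eta>3" "\<eta>3 < 1"
    and C1: "alpha0 k \<alpha> / \<alpha> - \<mu> * \<eta>2 ^ (k - 1) > 0"
    and C2: "\<mu> > real k * p * r / (1 - p)"
    and C3: "r * ln (1 - p) + \<eta>3 > 0"
  shows "(\<forall>n \<ge> 2. \<forall>\<omega> \<in> {1..n}. Phic k p r \<alpha> n (real \<omega>) = Phi k p r \<alpha> n \<omega>)
       \<and> (\<forall>\<^sub>F n in sequentially. \<forall>z::real.
            real n * eta1 k \<alpha> lam n < z \<and> z < real n * \<eta>2 \<longrightarrow>
            (\<exists>D. (Phic k p r \<alpha> n has_real_derivative D) (at z) \<and> D < 0))"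
proof (intro conjI)
  show "\<forall>n \<ge> 2. \<forall>\<omega> \<in> {1..n}. Phic k p r \<alpha> n (real \<omega>) = Phi k p r \<alpha> n \<omega>"
    using part1[OF _ apos] by blast
next
  define \<theta> where "\<theta> = r * (p/(1-p) * real k) * \<eta>2^(k-1)"
  define \<beta> where "\<beta> = (1 - 2*\<theta>)/2"
  define C where "C = 2 * r * (p/(1-p) * real k)"
  have e2: "\<eta>2 < 1" using eta by simp
  have Cpos: "C > 0" using rpos p0 p1 k2 by (simp add: C_def)
  have th_lt: "\<theta> < 1/2"
  proof -
    have h1: "\<eta>2^(k-1) > 0" using eta by simp
    have eqc: "r * (p/(1-p) * real k) = real k * p * r / (1 - p)" by simp
    have "r * (p/(1-p) * real k) < \<mu>" using C2 eqc by linarith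
    hence "\<theta> < \<mu> * \<eta>2^(k-1)" unfolding \<theta>_def using h1 by (rule mult_strict_right_mono)
    also have "\<dots> < alpha0 k \<alpha> / \<alpha>" using C1 by simp
    also have "alpha0 k \<alpha> / \<alpha> \<le> 1/2"
    proof -
      have km: "real k - 1 > 0" using k2 by simp
      have "(2 * real k - 1) * \<alpha> - 1 \<le> (real k - 1) * \<alpha>" using A2 by (simp add: algebra_simps)
      hence "((2 * real k - 1) * \<alpha> - 1) / (2 * (real k - 1)) \<le> \<alpha> / 2"
        using km by (simp add: field_simps)
      hence "alpha0 k \<alpha> \<le> \<alpha> / 2" by (simp add: alpha0_def)
      thus ?thesis using apos by (simp add: field_simps)
    qed
    finally show ?thesis .
  qed
  have b0: "\<beta> > 0" using th_lt by (simp add: \<beta>_def)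
  have c6: "1 - \<beta> - 2*\<theta> > 0"
  proof -
    have "1 - \<beta> - 2*\<theta> = (1 - 2*\<theta>)/2" by (simp add: \<beta>_def field_simps)
    thus ?thesis using th_lt by simp
  qed
  have j: "Suc (k-1) = k" using k2 by simp
  have F4x: "eventually (\<lambda>x. (x powr \<alpha> * (lam / (x powr (1 - (real k - 1)*\<alpha>) * ln (x powr \<alpha>))))/2 - 2/x
         > C * ln (x powr \<alpha>) * (2 / x powr \<alpha>)^(k-1)) at_top"
  proof -
    have "eventually (\<lambda>x. x > (1::real)) at_top" by (rule eventually_gt_at_top)
    moreover have "eventually (\<lambda>x. (4*\<alpha>/lam) * ln x / (x powr \<alpha>)^(Suc (k-1)) < 1/2) at_top"
      by (rule ev_A[OF apos lam])
    moreover have "eventually (\<lambda>x. (2*C*\<alpha>^2*2^(k-1)/lam) * (ln x)^2 * (x / (x powr \<alpha>)^(2*(k-1)+1)) < 1/2) at_top"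
      by (rule ev_B[OF apos]) (use A1 k2 in \<open>simp add: of_nat_diff algebra_simps\<close>)
    ultimately show ?thesis
    proof eventually_elim
      case (elim x)
      from E4_pointwise[OF elim(1) apos lam _ elim(2) elim(3)] Cpos j show ?case by simp
    qed
  qed
  have F5x: "eventually (\<lambda>x::real. ln 2 - 2/x > C * ln (x powr \<alpha>) * (x powr \<alpha>) powr (-\<beta>)) at_top"
    using apos b0 Cpos by real_asymp
  have F6x: "eventually (\<lambda>x::real. (1 - \<beta> - 2*\<theta>) * ln (x powr \<alpha>) > 2 / x) at_top"
    using apos c6 by real_asymp
  have F3x: "eventually (\<lambda>x::real. (1/(x powr \<alpha>))^k * (1 + p/(1-p)) < 1/2) at_top"
    using apos p0 p1 k2 by real_asymp
  have F2x: "eventually (\<lambda>x::real. x powr \<alpha> \<ge> 2) at_top"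
    using apos by real_asymp
  have F1x: "eventually (\<lambda>x::real. x \<ge> 2) at_top" by (rule eventually_ge_at_top)
  have tr: "eventually (\<lambda>n. P (real n)) sequentially" if "eventually P at_top" for P
    using filterlim_real_sequentially that unfolding filterlim_iff by blast
  note ev = tr[OF F1x] tr[OF F2x] tr[OF F3x] tr[OF F4x] tr[OF F5x] tr[OF F6x]
  show "\<forall>\<^sub>F n in sequentially. \<forall>z::real.
            real n * eta1 k \<alpha> lam n < z \<and> z < real n * \<eta>2 \<longrightarrow>
            (\<exists>D. (Phic k p r \<alpha> n has_real_derivative D) (at z) \<and> D < 0)"
    using ev
  proof eventually_elim
    case (elim n)
    define d where "d = dd \<alpha> n"
    have dd: "dd \<alpha> n = real n powr \<alpha>" by (simp add: dd_def)
    define \<delta> where "\<delta> = d * (lam / (real n powr (1 - (real k - 1)*\<alpha>) * ln d))"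
    have d2: "d \<ge> 2" using elim(2) by (simp add: d_def dd)
    have dl: "\<delta> > 0" using d2 lam elim(1) by (simp add: \<delta>_def)
    have eq1: "1/d + \<delta>/d = eta1 k \<alpha> lam n" using d2 by (simp add: \<delta>_def eta1_def d_def)
    show ?case
    proof (intro allI impI)
      fix z assume z: "real n * eta1 k \<alpha> lam n < z \<and> z < real n * \<eta>2"
      show "\<exists>D. (Phic k p r \<alpha> n has_real_derivative D) (at z) \<and> D < 0"
      proof (rule neg_at[where \<beta>=\<beta>, OF elim(1) _ k2 rpos p0 p1 _ dl e2 \<theta>_def])
        show "2 \<le> dd \<alpha> n" using d2 by (simp add: d_def)
        show "(1 / dd \<alpha> n) ^ k * (1 + p / (1 - p)) < 1 / 2" using elim(3) by (simp add: dd)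
        show "2 * r * (p / (1 - p) * real k) * ln (dd \<alpha> n) * (2 / dd \<alpha> n) ^ (k - 1) < \<delta> / 2 - 2 / real n"
          using elim(4) by (simp add: \<delta>_def d_def dd C_def)
        show "2 * r * (p / (1 - p) * real k) * ln (dd \<alpha> n) * dd \<alpha> n powr - \<beta> < ln 2 - 2 / real n"
          using elim(5) by (simp add: dd C_def)
        show "2 / real n < (1 - \<beta> - 2 * \<theta>) * ln (dd \<alpha> n)"
          using elim(6) by (simp add: dd)
        show "real n * (1 / dd \<alpha> n + \<delta> / dd \<alpha> n) < z" using z eq1 by (simp add: d_def)
        show "z < real n * \<eta>2" using z by simp
      qed
    qed
  qed
qed

end
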